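(* Let $(X,d)$ be a proper metric space and $f:X\to X$ continuous with $f_*:(\mathcal P_1(X),w_1)\to(\mathcal P_1(X),w_1)$ continuous. Let $B^w\subset\mathcal P_1(X)$ be closed and bounded, $\delta>0$, and $U=U_\delta(B^w)$ its $w_1$-open $\delta$-neighborhood; suppose $\operatorname{cl}U$ is $f_*$-admissible. Let $F_n:\mathcal P_1(X)\to\mathcal P_1(X)$ be continuous maps with \[ \sup_{\mu\in U}w_1(f_*(\mu),F_n(\mu))=\epsilon_n\to0. \] If $f_*$ is uniformly continuous on $U$, then $B^w$ is $\{F_n\}$-admissible.
   Context: A metric space is proper if closed bounded sets are compact. $\mathcal P_1(X)$ is the set of Borel probability measures with finite first moment, metrized by $w_1(\mu,\nu)=\inf_{\pi\in\Pi(\mu,\nu)}\int d(x,y)\,d\pi$. $f_*\mu=\mu\circ f^{-1}$ is the push-forward. A closed bounded set $N$ is $\{F_n\}$-admissible if, for any sequences $\mu_n$ and $m_n\to\infty$ with $F_n^k(\mu_n)\in N$ for all $0\le k\le m_n$, the sequence $F_n^{m_n}(\mu_n)$ has a convergent subsequence. $F$-admissible means this holds with $F_n\equiv F$. *)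

theory Defs
  imports "HOL-Probability.Probability"
begin

definition proper_space :: "'a::metric_space itself \<Rightarrow> bool" where
  "proper_space _ \<longleftrightarrow> (\<forall>S::'a set. closed S \<and> bounded S \<longrightarrow> compact S)"

definition P1 :: "'a::metric_space measure set" where
  "P1 = {\<mu>. sets \<mu> = sets borel \<and> prob_space \<mu> \<and>
            (\<exists>x0. (\<integral>\<^sup>+ x. ennreal (dist x x0) \<partial>\<mu>) < \<infinity>)}"

definition couplings :: "'a::metric_space measure \<Rightarrow> 'a measure \<Rightarrow> ('a \<times> 'a) measure set" where
  "couplings \<mu> \<nu> = {\<pi>. sets \<pi> = sets (borel :: ('a \<times> 'a) measure) \<and> prob_space \<pi> \<and>
                        distr \<pi> borel fst = \<mu> \<and> distr \<pi> borel snd = \<nu>}"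

definition w1 :: "'a::metric_space measure \<Rightarrow> 'a measure \<Rightarrow> real" where
  "w1 \<mu> \<nu> = enn2real (INF \<pi>\<in>couplings \<mu> \<nu>. \<integral>\<^sup>+ p. ennreal (dist (fst p) (snd p)) \<partial>\<pi>)"

definition push :: "('a::metric_space \<Rightarrow> 'a) \<Rightarrow> 'a measure \<Rightarrow> 'a measure" where
  "push f \<mu> = distr \<mu> borel f"

definition w1_closed :: "'a::metric_space measure set \<Rightarrow> bool" where
  "w1_closed N \<longleftrightarrow> N \<subseteq> P1 \<and>
     (\<forall>\<nu>\<in>P1 - N. \<exists>e>0. \<forall>\<mu>\<in>P1. w1 \<nu> \<mu> < e \<longrightarrow> \<mu> \<notin> N)"

definition w1_bounded :: "'a::metric_space measure set \<Rightarrow> bool" where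
  "w1_bounded N \<longleftrightarrow> N \<subseteq> P1 \<and> (\<exists>r. \<forall>\<mu>\<in>N. \<forall>\<nu>\<in>N. w1 \<mu> \<nu> \<le> r)"

definition w1_nbhd :: "'a::metric_space measure set \<Rightarrow> real \<Rightarrow> 'a measure set" where
  "w1_nbhd B \<delta> = {\<mu>\<in>P1. \<exists>\<nu>\<in>B. w1 \<mu> \<nu> < \<delta>}"

definition w1_closure :: "'a::metric_space measure set \<Rightarrow> 'a measure set" where
  "w1_closure U = {\<mu>\<in>P1. \<forall>e>0. \<exists>\<nu>\<in>U. w1 \<mu> \<nu> < e}"

definition w1_continuous :: "('a::metric_space measure \<Rightarrow> 'a measure) \<Rightarrow> bool" where
  "w1_continuous F \<longleftrightarrow> F ` P1 \<subseteq> P1 \<and>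
     (\<forall>\<mu>\<in>P1. \<forall>e>0. \<exists>d>0. \<forall>\<nu>\<in>P1. w1 \<mu> \<nu> < d \<longrightarrow> w1 (F \<mu>) (F \<nu>) < e)"

definition w1_unif_continuous_on :: "'a::metric_space measure set \<Rightarrow> ('a measure \<Rightarrow> 'a measure) \<Rightarrow> bool" where
  "w1_unif_continuous_on U F \<longleftrightarrow>
     (\<forall>e>0. \<exists>d>0. \<forall>\<mu>\<in>U. \<forall>\<nu>\<in>U. w1 \<mu> \<nu> < d \<longrightarrow> w1 (F \<mu>) (F \<nu>) < e)"

definition admissible :: "(nat \<Rightarrow> 'a::metric_space measure \<Rightarrow> 'a measure) \<Rightarrow> 'a measure set \<Rightarrow> bool" where
  "admissible F N \<longleftrightarrow>
     (\<forall>\<mu>s :: nat \<Rightarrow> 'a measure. \<forall>m :: nat \<Rightarrow> nat.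
        filterlim m at_top sequentially \<and>
        (\<forall>n k. k \<le> m n \<longrightarrow> (F n ^^ k) (\<mu>s n) \<in> N) \<longrightarrow>
        (\<exists>r \<nu>. strict_mono r \<and> \<nu> \<in> P1 \<and>
           (\<lambda>j. w1 ((F (r j) ^^ m (r j)) (\<mu>s (r j))) \<nu>) \<longlonglongrightarrow> 0))"

end

theory Submission
  imports Defs
begin

lemma proper_separable:
  assumes "proper_space TYPE('a::metric_space)"
  shows "\<exists>d::nat\<Rightarrow>'a. \<forall>x e. e > 0 \<longrightarrow> (\<exists>n. dist x (d n) < e)"
proof -
  obtain x0 :: 'a where True by blast
  have cpt: "compact (cball x0 (real R))" for R :: nat
    using assms unfolding proper_space_def by auto
  have "\<exists>C. finite C \<and> cball x0 (real R) \<subseteq> (\<Union>y\<in>C. ball y (1 / Suc m))" for R m :: nat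
    using seq_compact_imp_totally_bounded[OF compact_imp_seq_compact[OF cpt[of R]]]
    by (metis divide_pos_pos of_nat_0_less_iff zero_less_Suc zero_less_one)
  then have "\<forall>R m. \<exists>C. finite C \<and> cball x0 (real R) \<subseteq> (\<Union>y\<in>C. ball y (1 / Suc m))" by blast
  then have "\<exists>C. \<forall>R m. finite (C R m) \<and> cball x0 (real R) \<subseteq> (\<Union>y\<in>C R m. ball y (1 / Suc m))"
    by (simp only: choice_iff)
  then obtain C where C: "\<And>R m. finite (C R m)" "\<And>R m. cball x0 (real R) \<subseteq> (\<Union>y\<in>C R m. ball y (1 / Suc m))"
    by blast
  define D where "D = insert x0 (\<Union>R m. C R m)"
  have cD: "countable D" using C(1) unfolding D_def
    by (intro countable_insert countable_UN[OF countableI_type] countable_finite) auto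
  have neD: "D \<noteq> {}" unfolding D_def by auto
  have dense: "\<exists>y\<in>D. dist x y < e" if "e > 0" for x e
  proof -
    obtain R :: nat where R: "dist x0 x \<le> R" using real_arch_simple by blast
    obtain m :: nat where m: "1 / Suc m < e"
      by (rule nat_approx_posE[OF \<open>e > 0\<close>])
    have "x \<in> cball x0 (real R)" using R by auto
    with C(2)[of R m] have "x \<in> (\<Union>y\<in>C R m. ball y (1 / Suc m))" by (rule subsetD)
    then obtain y where "y \<in> C R m" "x \<in> ball y (1 / Suc m)" by (rule UN_E)
    then have "y \<in> C R m" "dist y x < 1 / Suc m" by auto
    then have "y \<in> D" "dist x y < e" unfolding D_def using m by (auto simp: dist_commute)
    then show ?thesis by blast
  qed
  show ?thesis
  proof (rule exI[of _ "from_nat_into D"], intro allI impI)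
    fix x and e :: real assume "e > 0"
    then obtain y where "y \<in> D" "dist x y < e" using dense by blast
    then show "\<exists>n. dist x (from_nat_into D n) < e"
      using from_nat_into_surj[OF cD \<open>y \<in> D\<close>] by metis
  qed
qed

lemma sets_borel_prod_sep:
  fixes d :: "nat \<Rightarrow> 'a::metric_space"
  assumes dense: "\<forall>x e. e > 0 \<longrightarrow> (\<exists>n. dist x (d n) < e)"
  shows "sets (borel \<Otimes>\<^sub>M borel :: ('a \<times> 'a) measure) = sets (borel :: ('a \<times> 'a) measure)"
proof (rule antisym)
  have "(\<lambda>x. (fst x, snd x)) \<in> measurable (borel :: ('a \<times> 'a) measure) (borel \<Otimes>\<^sub>M borel)"
    by (intro measurable_Pair borel_measurable_continuous_onI continuous_intros)
  then show "sets (borel \<Otimes>\<^sub>M borel :: ('a \<times> 'a) measure) \<subseteq> sets (borel :: ('a \<times> 'a) measure)"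
    by (auto dest: measurable_sets)
next
  have "(\<lambda>x. x) \<in> borel_measurable (borel \<Otimes>\<^sub>M borel :: ('a \<times> 'a) measure)"
  proof (rule borel_measurableI)
    fix S :: "('a \<times> 'a) set" assume S: "open S"
    define r where "r = (\<lambda>m::nat. 1 / real (Suc m))"
    define A where "A = (\<lambda>(i,j,m). ball (d i) (r m) \<times> ball (d j) (r m))"
    define X where "X = {ijm. A ijm \<subseteq> S}"
    have eq: "S = (\<Union>x\<in>X. A x)"
    proof
      show "(\<Union>x\<in>X. A x) \<subseteq> S" unfolding X_def by auto
    next
      show "S \<subseteq> (\<Union>x\<in>X. A x)"
      proof
        fix p assume "p \<in> S"
        obtain x z where p: "p = (x, z)" by (cases p)
        from S \<open>p \<in> S\<close> obtain e where e: "e > 0" "\<And>q. dist q p < e \<Longrightarrow> q \<in> S"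
          unfolding open_dist by blast
        obtain m :: nat where m: "1 / real (Suc m) < e / 4"
          by (rule nat_approx_posE[of "e/4"]) (use e(1) in auto)
        have rm: "r m < e / 4" "r m > 0" using m unfolding r_def by auto
        obtain i where i: "dist x (d i) < r m" using dense rm(2) by blast
        obtain j where j: "dist z (d j) < r m" using dense rm(2) by blast
        have "A (i,j,m) \<subseteq> S"
        proof
          fix q assume "q \<in> A (i,j,m)"
          then obtain a b where q: "q = (a,b)" "dist (d i) a < r m" "dist (d j) b < r m"
            unfolding A_def by auto
          have "dist a x < 2 * r m" using q(2) i dist_triangle[of a x "d i"]
            by (simp add: dist_commute)
          moreover have "dist b z < 2 * r m" using q(3) j dist_triangle[of b z "d j"]
            by (simp add: dist_commute)
          ultimately have "dist q p \<le> dist a x + dist b z"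
            unfolding q p dist_Pair_Pair by (simp add: sqrt_sum_squares_le_sum)
          also have "\<dots> < e" using \<open>dist a x < 2 * r m\<close> \<open>dist b z < 2 * r m\<close> rm by linarith
          finally show "q \<in> S" using e(2) by blast
        qed
        moreover have "p \<in> A (i,j,m)" unfolding A_def p using i j by (simp add: dist_commute)
        ultimately show "p \<in> (\<Union>x\<in>X. A x)" unfolding X_def by blast
      qed
    qed
    have "(\<Union>x\<in>X. A x) \<in> sets (borel \<Otimes>\<^sub>M borel :: ('a \<times> 'a) measure)"
      by (intro sets.countable_UN') (auto simp: A_def intro!: pair_measureI)
    then show "(\<lambda>x. x) -` S \<inter> space (borel \<Otimes>\<^sub>M borel) \<in> sets (borel \<Otimes>\<^sub>M borel :: ('a \<times> 'a) measure)"
      using eq by (simp add: space_pair_measure)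
  qed
  then show "sets (borel :: ('a \<times> 'a) measure) \<subseteq> sets (borel \<Otimes>\<^sub>M borel :: ('a \<times> 'a) measure)"
  proof (intro subsetI)
    fix A :: "('a \<times> 'a) set" assume "A \<in> sets borel"
    from measurable_sets[OF \<open>(\<lambda>x. x) \<in> borel_measurable (borel \<Otimes>\<^sub>M borel)\<close> this]
    show "A \<in> sets (borel \<Otimes>\<^sub>M borel)" by (simp add: space_pair_measure)
  qed
qed

lemma coupling_props:
  assumes "\<pi> \<in> couplings \<mu> \<nu>"
  shows "sets \<pi> = sets borel" "prob_space \<pi>" "distr \<pi> borel fst = \<mu>" "distr \<pi> borel snd = \<nu>"
  using assms unfolding couplings_def by auto

lemma fst_borel[measurable]: "fst \<in> borel_measurable (borel :: ('a::metric_space \<times> 'a) measure)"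
  by (intro borel_measurable_continuous_onI continuous_intros)
lemma snd_borel[measurable]: "snd \<in> borel_measurable (borel :: ('a::metric_space \<times> 'a) measure)"
  by (intro borel_measurable_continuous_onI continuous_intros)

lemma emeasure_pre:
  assumes "f \<in> measurable M N" "A \<in> sets N"
  shows "emeasure M (f -` A \<inter> space M) = (\<integral>\<^sup>+x. indicator A (f x) \<partial>M)"
proof -
  have "f -` A \<inter> space M \<in> sets M" using assms by (rule measurable_sets)
  then have "emeasure M (f -` A \<inter> space M) = (\<integral>\<^sup>+x. indicator (f -` A \<inter> space M) x \<partial>M)"
    by (simp add: nn_integral_indicator)
  also have "\<dots> = (\<integral>\<^sup>+x. indicator A (f x) \<partial>M)"
    by (intro nn_integral_cong) (auto simp: indicator_def)
  finally show ?thesis .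
qed

lemma glue:
  fixes d :: "nat \<Rightarrow> 'a::metric_space" and \<mu> \<nu> \<rho> :: "'a measure"
  assumes dense: "\<forall>x e. e > 0 \<longrightarrow> (\<exists>n. dist x (d n) < e)"
    and p1: "\<pi>1 \<in> couplings \<mu> \<nu>" and p2: "\<pi>2 \<in> couplings \<nu> \<rho>" and e: "e > 0"
  shows "\<exists>\<gamma>\<in>couplings \<mu> \<rho>. (\<integral>\<^sup>+z. ennreal (dist (fst z) (snd z)) \<partial>\<gamma>) \<le>
     (\<integral>\<^sup>+z. ennreal (dist (fst z) (snd z)) \<partial>\<pi>1) + (\<integral>\<^sup>+z. ennreal (dist (fst z) (snd z)) \<partial>\<pi>2) + ennreal e"
proof -
  note c1 = coupling_props[OF p1] and c2 = coupling_props[OF p2]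
  interpret P1: prob_space \<pi>1 by (rule c1(2))
  interpret P2: prob_space \<pi>2 by (rule c2(2))
  interpret PP: pair_prob_space \<pi>1 \<pi>2 by unfold_locales
  have s1[measurable_cong]: "sets \<pi>1 = sets borel" by (rule c1(1))
  have s2[measurable_cong]: "sets \<pi>2 = sets borel" by (rule c2(1))
  have nu1: "\<nu> = distr \<pi>1 borel snd" using c1(4) by simp
  have nu2: "\<nu> = distr \<pi>2 borel fst" using c2(3) by simp
  have mu1: "\<mu> = distr \<pi>1 borel fst" using c1(3) by simp
  have rho2: "\<rho> = distr \<pi>2 borel snd" using c2(4) by simp
  interpret N: prob_space \<nu> unfolding nu1 by (rule P1.prob_space_distr) measurable
  define c where "c = (\<lambda>y. LEAST n. dist y (d n) < e/2)"
  have c_in: "dist y (d (c y)) < e/2" for y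
  proof -
    obtain n where "dist y (d n) < e/2" using dense e by (metis half_gt_zero)
    then show ?thesis unfolding c_def by (rule LeastI)
  qed
  have c_same: "dist y y' < e" if "c y = c y'" for y y'
    using c_in[of y] c_in[of y'] that dist_triangle[of y y' "d (c y)"] by (simp add: dist_commute)
  have [measurable]: "Measurable.pred borel (\<lambda>w. dist w (d n) < e/2)" for n
  proof -
    have "{w \<in> space borel. dist w (d n) < e/2} = ball (d n) (e/2)" by (auto simp: dist_commute)
    then show ?thesis unfolding pred_def by simp
  qed
  have c_meas[measurable]: "c \<in> borel \<rightarrow>\<^sub>M count_space UNIV" unfolding c_def by measurable
  have sN[measurable_cong]: "sets \<nu> = sets borel" by (simp add: nu1)
  have cell[measurable]: "{y. c y = n} \<in> sets \<nu>" for n unfolding sN by measurable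
  define nc where "nc n = emeasure \<nu> {y. c y = n}" for n
  have nc_fin: "nc n < top" for n unfolding nc_def less_top[symmetric] by (rule N.emeasure_finite)
  define K :: "nat \<Rightarrow> nat \<Rightarrow> ennreal" where "K n m = (if n = m \<and> nc n \<noteq> 0 then 1 / nc n else 0)" for n m
  define Z :: "nat \<Rightarrow> ennreal" where "Z n = (if nc n \<noteq> 0 then 1 else 0)" for n
  have Ksym: "K n m = K m n" for n m unfolding K_def by auto
  have intK: "(\<integral>\<^sup>+y. K n (c y) \<partial>\<nu>) = Z n" for n
  proof -
    have "(\<integral>\<^sup>+y. K n (c y) \<partial>\<nu>) = (\<integral>\<^sup>+y. (if nc n \<noteq> 0 then 1 / nc n else 0) * indicator {y. c y = n} y \<partial>\<nu>)"
      by (intro nn_integral_cong) (auto simp: K_def indicator_def)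
    also have "\<dots> = (if nc n \<noteq> 0 then 1 / nc n else 0) * nc n"
      unfolding nc_def by (rule nn_integral_cmult_indicator[OF cell])
    also have "\<dots> = Z n" using nc_fin[of n] unfolding Z_def by (auto simp: ennreal_divide_times)
    finally show ?thesis .
  qed
  have L1: "(\<integral>\<^sup>+q. K n (c (fst q)) \<partial>\<pi>2) = Z n" for n
    using intK[of n] unfolding nu2 by (subst (asm) nn_integral_distr) auto
  have L2: "(\<integral>\<^sup>+p. K (c (snd p)) m \<partial>\<pi>1) = Z m" for m
    using intK[of m] unfolding nu1 by (subst (asm) nn_integral_distr) (auto simp: Ksym)
  have nullset: "{y. nc (c y) = 0} \<in> null_sets \<nu>"
  proof -
    have "{y. nc (c y) = 0} = (\<Union>n\<in>{n. nc n = 0}. {y. c y = n})" by auto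
    also have "\<dots> \<in> null_sets \<nu>"
      by (intro null_sets_UN') (auto simp: nc_def intro!: null_setsI)
    finally show ?thesis .
  qed
  have AEN: "AE y in \<nu>. nc (c y) \<noteq> 0"
    by (rule AE_I'[OF nullset]) auto
  have AE1: "AE p in \<pi>1. nc (c (snd p)) \<noteq> 0"
    using AEN unfolding nu1 by (subst (asm) AE_distr_iff) auto
  have AE2: "AE q in \<pi>2. nc (c (fst q)) \<noteq> 0"
    using AEN unfolding nu2 by (subst (asm) AE_distr_iff) auto
  define k where "k = (\<lambda>x::(('a\<times>'a)\<times>('a\<times>'a)). K (c (snd (fst x))) (c (fst (snd x))))"
  have k_meas[measurable]: "k \<in> borel_measurable (\<pi>1 \<Otimes>\<^sub>M \<pi>2)"
    unfolding k_def by measurable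
  define g where "g = (\<lambda>x::(('a\<times>'a)\<times>('a\<times>'a)). (fst (fst x), snd (snd x)))"
  have g_meas0: "g \<in> measurable (\<pi>1 \<Otimes>\<^sub>M \<pi>2) (borel \<Otimes>\<^sub>M borel)"
    unfolding g_def by measurable
  have g_meas[measurable]: "g \<in> measurable (\<pi>1 \<Otimes>\<^sub>M \<pi>2) borel"
    using g_meas0 unfolding measurable_cong_sets[OF refl sets_borel_prod_sep[OF dense]] .
  define \<gamma> where "\<gamma> = distr (density (\<pi>1 \<Otimes>\<^sub>M \<pi>2) k) borel g"
  have sg[measurable_cong]: "sets \<gamma> = sets borel" unfolding \<gamma>_def by simp
  have G: "(\<integral>\<^sup>+z. h z \<partial>\<gamma>) = (\<integral>\<^sup>+x. k x * h (g x) \<partial>(\<pi>1 \<Otimes>\<^sub>M \<pi>2))"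
    if [measurable]: "h \<in> borel_measurable borel" for h
    unfolding \<gamma>_def by (subst nn_integral_distr) (auto simp: nn_integral_density)
  have F1: "(\<integral>\<^sup>+x. k x * f (fst x) \<partial>(\<pi>1 \<Otimes>\<^sub>M \<pi>2)) = (\<integral>\<^sup>+p. f p \<partial>\<pi>1)"
    if [measurable]: "f \<in> borel_measurable \<pi>1" for f
  proof -
    have "(\<integral>\<^sup>+x. k x * f (fst x) \<partial>(\<pi>1 \<Otimes>\<^sub>M \<pi>2)) = (\<integral>\<^sup>+p. \<integral>\<^sup>+q. k (p,q) * f p \<partial>\<pi>2 \<partial>\<pi>1)"
      by (subst P2.nn_integral_fst[symmetric]) auto
    also have "\<dots> = (\<integral>\<^sup>+p. Z (c (snd p)) * f p \<partial>\<pi>1)"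
      unfolding k_def by (intro nn_integral_cong) (simp add: nn_integral_multc L1)
    also have "\<dots> = (\<integral>\<^sup>+p. f p \<partial>\<pi>1)"
      using AE1 by (intro nn_integral_cong_AE) (auto simp: Z_def)
    finally show ?thesis .
  qed
  have F2: "(\<integral>\<^sup>+x. k x * f (snd x) \<partial>(\<pi>1 \<Otimes>\<^sub>M \<pi>2)) = (\<integral>\<^sup>+q. f q \<partial>\<pi>2)"
    if [measurable]: "f \<in> borel_measurable \<pi>2" for f
  proof -
    have "(\<integral>\<^sup>+x. k x * f (snd x) \<partial>(\<pi>1 \<Otimes>\<^sub>M \<pi>2)) = (\<integral>\<^sup>+q. \<integral>\<^sup>+p. k (p,q) * f q \<partial>\<pi>1 \<partial>\<pi>2)"
      by (subst PP.nn_integral_snd[symmetric]) auto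
    also have "\<dots> = (\<integral>\<^sup>+q. Z (c (fst q)) * f q \<partial>\<pi>2)"
      unfolding k_def by (intro nn_integral_cong) (simp add: nn_integral_multc L2)
    also have "\<dots> = (\<integral>\<^sup>+q. f q \<partial>\<pi>2)"
      using AE2 by (intro nn_integral_cong_AE) (auto simp: Z_def)
    finally show ?thesis .
  qed
  have fg: "fst \<in> measurable \<gamma> borel" "snd \<in> measurable \<gamma> borel" by measurable
  have f1: "fst \<in> measurable \<pi>1 borel" "snd \<in> measurable \<pi>2 borel" by measurable
  have m1: "distr \<gamma> borel fst = \<mu>"
  proof (rule measure_eqI)
    show "sets (distr \<gamma> borel fst) = sets \<mu>" by (simp add: mu1)
    fix A assume "A \<in> sets (distr \<gamma> borel fst)"
    then have A[measurable]: "A \<in> sets borel" by simp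
    have "emeasure (distr \<gamma> borel fst) A = (\<integral>\<^sup>+z. indicator A (fst z) \<partial>\<gamma>)"
      by (simp add: emeasure_distr[OF fg(1) A] emeasure_pre[OF fg(1) A])
    also have "\<dots> = (\<integral>\<^sup>+x. k x * indicator A (fst (fst x)) \<partial>(\<pi>1 \<Otimes>\<^sub>M \<pi>2))"
      by (subst G) (auto simp: g_def)
    also have "\<dots> = (\<integral>\<^sup>+p. indicator A (fst p) \<partial>\<pi>1)"
      by (rule F1[of "\<lambda>p. indicator A (fst p)"]) measurable
    also have "\<dots> = emeasure \<mu> A"
      unfolding mu1 by (simp add: emeasure_distr[OF f1(1) A] emeasure_pre[OF f1(1) A])
    finally show "emeasure (distr \<gamma> borel fst) A = emeasure \<mu> A" .
  qed
  have m2: "distr \<gamma> borel snd = \<rho>"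
  proof (rule measure_eqI)
    show "sets (distr \<gamma> borel snd) = sets \<rho>" by (simp add: rho2)
    fix A assume "A \<in> sets (distr \<gamma> borel snd)"
    then have A[measurable]: "A \<in> sets borel" by simp
    have "emeasure (distr \<gamma> borel snd) A = (\<integral>\<^sup>+z. indicator A (snd z) \<partial>\<gamma>)"
      by (simp add: emeasure_distr[OF fg(2) A] emeasure_pre[OF fg(2) A])
    also have "\<dots> = (\<integral>\<^sup>+x. k x * indicator A (snd (snd x)) \<partial>(\<pi>1 \<Otimes>\<^sub>M \<pi>2))"
      by (subst G) (auto simp: g_def)
    also have "\<dots> = (\<integral>\<^sup>+q. indicator A (snd q) \<partial>\<pi>2)"
      by (rule F2[of "\<lambda>q. indicator A (snd q)"]) measurable
    also have "\<dots> = emeasure \<rho> A"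
      unfolding rho2 by (simp add: emeasure_distr[OF f1(2) A] emeasure_pre[OF f1(2) A])
    finally show "emeasure (distr \<gamma> borel snd) A = emeasure \<rho> A" .
  qed
  have pg: "prob_space \<gamma>"
  proof
    have "emeasure \<gamma> (space \<gamma>) = emeasure (distr \<gamma> borel fst) UNIV"
      by (subst emeasure_distr) (auto simp: sets_eq_imp_space_eq[OF sg])
    also have "\<dots> = emeasure \<mu> (space \<mu>)" using m1 by (simp add: mu1)
    also have "\<dots> = 1" unfolding mu1 by (rule prob_space.emeasure_space_1[OF P1.prob_space_distr[OF f1(1)]])
    finally show "emeasure \<gamma> (space \<gamma>) = 1" .
  qed
  have cpl: "\<gamma> \<in> couplings \<mu> \<rho>" unfolding couplings_def using sg pg m1 m2 by auto
  have dm[measurable]: "(\<lambda>z::'a\<times>'a. dist (fst z) (snd z)) \<in> borel_measurable borel"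
    by (intro borel_measurable_continuous_onI continuous_intros)
  have pw: "k x * ennreal (dist (fst (fst x)) (snd (snd x))) \<le>
      (k x * ennreal (dist (fst (fst x)) (snd (fst x))) + k x * ennreal e) + k x * ennreal (dist (fst (snd x)) (snd (snd x)))" for x
  proof (cases "k x = 0")
    case True then show ?thesis by simp
  next
    case False
    then have "c (snd (fst x)) = c (fst (snd x))" unfolding k_def K_def by (auto split: if_splits)
    then have "dist (snd (fst x)) (fst (snd x)) < e" by (rule c_same)
    then have "dist (fst (fst x)) (snd (snd x)) \<le> dist (fst (fst x)) (snd (fst x)) + e + dist (fst (snd x)) (snd (snd x))"
      using dist_triangle[of "fst (fst x)" "snd (snd x)" "snd (fst x)"] dist_triangle[of "snd (fst x)" "snd (snd x)" "fst (snd x)"]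
      by linarith
    then have "ennreal (dist (fst (fst x)) (snd (snd x))) \<le> ennreal (dist (fst (fst x)) (snd (fst x))) + ennreal e + ennreal (dist (fst (snd x)) (snd (snd x)))"
      using e by (simp add: ennreal_plus[symmetric] del: ennreal_plus)
    then show ?thesis by (metis distrib_left mult_left_mono zero_le)
  qed
  have "(\<integral>\<^sup>+z. ennreal (dist (fst z) (snd z)) \<partial>\<gamma>) = (\<integral>\<^sup>+x. k x * ennreal (dist (fst (fst x)) (snd (snd x))) \<partial>(\<pi>1 \<Otimes>\<^sub>M \<pi>2))"
    by (subst G) (auto simp: g_def)
  also have "\<dots> \<le> (\<integral>\<^sup>+x. (k x * ennreal (dist (fst (fst x)) (snd (fst x))) + k x * ennreal e) + k x * ennreal (dist (fst (snd x)) (snd (snd x))) \<partial>(\<pi>1 \<Otimes>\<^sub>M \<pi>2))"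
    by (intro nn_integral_mono pw)
  also have "\<dots> = (\<integral>\<^sup>+x. k x * ennreal (dist (fst (fst x)) (snd (fst x))) \<partial>(\<pi>1 \<Otimes>\<^sub>M \<pi>2)) + (\<integral>\<^sup>+x. k x * ennreal e \<partial>(\<pi>1 \<Otimes>\<^sub>M \<pi>2))
      + (\<integral>\<^sup>+x. k x * ennreal (dist (fst (snd x)) (snd (snd x))) \<partial>(\<pi>1 \<Otimes>\<^sub>M \<pi>2))"
    by (simp add: nn_integral_add)
  also have "(\<integral>\<^sup>+x. k x * ennreal (dist (fst (fst x)) (snd (fst x))) \<partial>(\<pi>1 \<Otimes>\<^sub>M \<pi>2)) = (\<integral>\<^sup>+p. ennreal (dist (fst p) (snd p)) \<partial>\<pi>1)"
    by (rule F1[of "\<lambda>p. ennreal (dist (fst p) (snd p))"]) measurable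
  also have "(\<integral>\<^sup>+x. k x * ennreal e \<partial>(\<pi>1 \<Otimes>\<^sub>M \<pi>2)) = (\<integral>\<^sup>+p. ennreal e \<partial>\<pi>1)"
    by (rule F1[of "\<lambda>p. ennreal e"]) measurable
  also have "(\<integral>\<^sup>+p. ennreal e \<partial>\<pi>1) = ennreal e" by (simp add: P1.emeasure_space_1)
  also have "(\<integral>\<^sup>+x. k x * ennreal (dist (fst (snd x)) (snd (snd x))) \<partial>(\<pi>1 \<Otimes>\<^sub>M \<pi>2)) = (\<integral>\<^sup>+q. ennreal (dist (fst q) (snd q)) \<partial>\<pi>2)"
    by (rule F2[of "\<lambda>q. ennreal (dist (fst q) (snd q))"]) measurable
  finally show ?thesis using cpl by (auto simp: add_ac)
qed

definition Icost :: "'a::metric_space measure \<Rightarrow> 'a measure \<Rightarrow> ennreal" where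
  "Icost \<mu> \<nu> = (INF \<pi>\<in>couplings \<mu> \<nu>. \<integral>\<^sup>+ p. ennreal (dist (fst p) (snd p)) \<partial>\<pi>)"

lemma w1_Icost: "w1 \<mu> \<nu> = enn2real (Icost \<mu> \<nu>)"
  unfolding w1_def Icost_def ..

lemma Icost_le: "\<pi> \<in> couplings \<mu> \<nu> \<Longrightarrow> Icost \<mu> \<nu> \<le> (\<integral>\<^sup>+ p. ennreal (dist (fst p) (snd p)) \<partial>\<pi>)"
  unfolding Icost_def by (rule INF_lower)

lemma Icost_tri:
  fixes \<mu> \<nu> \<rho> :: "'a::metric_space measure"
  assumes "proper_space TYPE('a)"
  shows "Icost \<mu> \<rho> \<le> Icost \<mu> \<nu> + Icost \<nu> \<rho>"
proof (rule ennreal_le_epsilon)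
  obtain d :: "nat \<Rightarrow> 'a" where dense: "\<forall>x e. e > 0 \<longrightarrow> (\<exists>n. dist x (d n) < e)"
    using proper_separable[OF assms] by blast
  fix e :: real assume fin: "Icost \<mu> \<nu> + Icost \<nu> \<rho> < top" and e: "0 < e"
  have f1: "Icost \<mu> \<nu> < top" and f2: "Icost \<nu> \<rho> < top" using fin by (auto simp: less_top[symmetric])
  have "Icost \<mu> \<nu> < Icost \<mu> \<nu> + ennreal (e/3)" using ennreal_add_left_cancel_less[of "Icost \<mu> \<nu>" 0 "ennreal (e/3)"] f1 e by (simp add: less_top)
  then obtain \<pi>1 where p1: "\<pi>1 \<in> couplings \<mu> \<nu>" "(\<integral>\<^sup>+ p. ennreal (dist (fst p) (snd p)) \<partial>\<pi>1) < Icost \<mu> \<nu> + ennreal (e/3)"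
    unfolding Icost_def by (auto simp: INF_less_iff)
  have "Icost \<nu> \<rho> < Icost \<nu> \<rho> + ennreal (e/3)" using ennreal_add_left_cancel_less[of "Icost \<nu> \<rho>" 0 "ennreal (e/3)"] f2 e by (simp add: less_top)
  then obtain \<pi>2 where p2: "\<pi>2 \<in> couplings \<nu> \<rho>" "(\<integral>\<^sup>+ p. ennreal (dist (fst p) (snd p)) \<partial>\<pi>2) < Icost \<nu> \<rho> + ennreal (e/3)"
    unfolding Icost_def by (auto simp: INF_less_iff)
  obtain \<gamma> where g: "\<gamma> \<in> couplings \<mu> \<rho>" "(\<integral>\<^sup>+z. ennreal (dist (fst z) (snd z)) \<partial>\<gamma>) \<le>
     (\<integral>\<^sup>+z. ennreal (dist (fst z) (snd z)) \<partial>\<pi>1) + (\<integral>\<^sup>+z. ennreal (dist (fst z) (snd z)) \<partial>\<pi>2) + ennreal (e/3)"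
    using glue[OF dense p1(1) p2(1), of "e/3"] e by auto
  have "Icost \<mu> \<rho> \<le> (\<integral>\<^sup>+z. ennreal (dist (fst z) (snd z)) \<partial>\<gamma>)" by (rule Icost_le[OF g(1)])
  also note g(2)
  also have "(\<integral>\<^sup>+z. ennreal (dist (fst z) (snd z)) \<partial>\<pi>1) + (\<integral>\<^sup>+z. ennreal (dist (fst z) (snd z)) \<partial>\<pi>2) + ennreal (e/3)
      \<le> (Icost \<mu> \<nu> + ennreal (e/3)) + (Icost \<nu> \<rho> + ennreal (e/3)) + ennreal (e/3)"
    using p1(2) p2(2) by (intro add_mono order.refl less_imp_le)
  also have "\<dots> = Icost \<mu> \<nu> + Icost \<nu> \<rho> + ennreal e"
    using e by (simp add: ennreal_plus[symmetric] add_ac del: ennreal_plus)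
  finally show "Icost \<mu> \<rho> \<le> Icost \<mu> \<nu> + Icost \<nu> \<rho> + ennreal e" .
qed

lemma meas_sets_borel:
  assumes "sets M = sets borel" "f \<in> measurable borel N" shows "f \<in> measurable M N"
  using assms(2) by (subst measurable_cong_sets[OF assms(1) refl])

lemma map_coupling:
  fixes \<mu> :: "'a::metric_space measure"
  assumes pm: "prob_space \<mu>" and sm: "sets \<mu> = sets borel" and gc: "continuous_on UNIV g"
  shows "distr \<mu> borel (\<lambda>x. (x, g x)) \<in> couplings \<mu> (distr \<mu> borel g)"
    and "(\<integral>\<^sup>+ p. ennreal (dist (fst p) (snd p)) \<partial>(distr \<mu> borel (\<lambda>x. (x, g x)))) = (\<integral>\<^sup>+ x. ennreal (dist x (g x)) \<partial>\<mu>)"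
proof -
  have gm: "g \<in> measurable \<mu> borel"
    by (rule meas_sets_borel[OF sm borel_measurable_continuous_onI[OF gc]])
  have hm: "(\<lambda>x. (x, g x)) \<in> measurable \<mu> borel"
    using gc by (intro meas_sets_borel[OF sm] borel_measurable_continuous_onI continuous_on_Pair continuous_on_id)
  have dm[measurable]: "(\<lambda>z::'a\<times>'a. dist (fst z) (snd z)) \<in> borel_measurable borel"
    by (intro borel_measurable_continuous_onI continuous_intros)
  have "distr (distr \<mu> borel (\<lambda>x. (x, g x))) borel fst = \<mu>"
    by (simp add: distr_distr[OF fst_borel hm] comp_def distr_id2[OF sm[symmetric]])
  moreover have "distr (distr \<mu> borel (\<lambda>x. (x, g x))) borel snd = distr \<mu> borel g"
    by (simp add: distr_distr[OF snd_borel hm] comp_def)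
  moreover have "prob_space (distr \<mu> borel (\<lambda>x. (x, g x)))"
    using prob_space.prob_space_distr[OF pm hm] .
  ultimately show "distr \<mu> borel (\<lambda>x. (x, g x)) \<in> couplings \<mu> (distr \<mu> borel g)"
    unfolding couplings_def by simp
  show "(\<integral>\<^sup>+ p. ennreal (dist (fst p) (snd p)) \<partial>(distr \<mu> borel (\<lambda>x. (x, g x)))) = (\<integral>\<^sup>+ x. ennreal (dist x (g x)) \<partial>\<mu>)"
    by (subst nn_integral_distr[OF hm]) auto
qed

lemma swap_coupling:
  fixes \<mu> \<nu> :: "'a::metric_space measure"
  assumes "\<pi> \<in> couplings \<mu> \<nu>"
  shows "distr \<pi> borel prod.swap \<in> couplings \<nu> \<mu>"
    and "(\<integral>\<^sup>+ p. ennreal (dist (fst p) (snd p)) \<partial>(distr \<pi> borel prod.swap)) = (\<integral>\<^sup>+ p. ennreal (dist (fst p) (snd p)) \<partial>\<pi>)"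
proof -
  note c = coupling_props[OF assms]
  have sw0: "prod.swap \<in> borel_measurable (borel :: ('a \<times> 'a) measure)"
    by (intro borel_measurable_continuous_onI continuous_intros)
  have sw: "prod.swap \<in> measurable \<pi> borel"
    by (rule meas_sets_borel[OF c(1) sw0])
  have fm: "fst \<in> measurable \<pi> borel" "snd \<in> measurable \<pi> borel"
    by (rule meas_sets_borel[OF c(1) fst_borel], rule meas_sets_borel[OF c(1) snd_borel])
  have "distr (distr \<pi> borel prod.swap) borel fst = \<nu>"
    using c(4) by (simp add: distr_distr[OF fst_borel sw] comp_def)
  moreover have "distr (distr \<pi> borel prod.swap) borel snd = \<mu>"
    using c(3) by (simp add: distr_distr[OF snd_borel sw] comp_def)
  moreover have "prob_space (distr \<pi> borel prod.swap)"
    using prob_space.prob_space_distr[OF c(2) sw] .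
  ultimately show "distr \<pi> borel prod.swap \<in> couplings \<nu> \<mu>"
    unfolding couplings_def by simp
  have dm[measurable]: "(\<lambda>z::'a\<times>'a. dist (fst z) (snd z)) \<in> borel_measurable borel"
    by (intro borel_measurable_continuous_onI continuous_intros)
  show "(\<integral>\<^sup>+ p. ennreal (dist (fst p) (snd p)) \<partial>(distr \<pi> borel prod.swap)) = (\<integral>\<^sup>+ p. ennreal (dist (fst p) (snd p)) \<partial>\<pi>)"
    by (subst nn_integral_distr[OF sw]) (auto simp: dist_commute)
qed

lemma Icost_sym: "Icost \<mu> \<nu> = Icost \<nu> (\<mu> :: 'a::metric_space measure)"
proof -
  have *: "Icost b a \<le> Icost a b" for a b :: "'a measure"
    unfolding Icost_def[of a b]
  proof (rule INF_greatest)
    fix \<pi> assume "\<pi> \<in> couplings a b"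
    from Icost_le[OF swap_coupling(1)[OF this]] swap_coupling(2)[OF this]
    show "Icost b a \<le> (\<integral>\<^sup>+ p. ennreal (dist (fst p) (snd p)) \<partial>\<pi>)" by simp
  qed
  show ?thesis using *[of \<mu> \<nu>] *[of \<nu> \<mu>] by (rule antisym)
qed

lemma P1D: "\<mu> \<in> P1 \<Longrightarrow> sets \<mu> = sets borel \<and> prob_space \<mu> \<and> (\<exists>x0. (\<integral>\<^sup>+ x. ennreal (dist x x0) \<partial>\<mu>) < \<infinity>)"
  unfolding P1_def by auto

lemma Icost_self: "\<mu> \<in> P1 \<Longrightarrow> Icost \<mu> \<mu> = 0"
proof -
  assume "\<mu> \<in> P1"
  note p = P1D[OF this]
  have "Icost \<mu> (distr \<mu> borel (\<lambda>x. x)) \<le> (\<integral>\<^sup>+ x. ennreal (dist x x) \<partial>\<mu>)"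
    using Icost_le[OF map_coupling(1)[of \<mu> "\<lambda>x. x"]] map_coupling(2)[of \<mu> "\<lambda>x. x"] p
    by (simp add: continuous_on_id)
  moreover have "distr \<mu> borel (\<lambda>x. x) = \<mu>" using p by (intro distr_id2) simp
  ultimately show ?thesis by (simp add: antisym)
qed

lemma Icost_fin:
  assumes hprop: "proper_space TYPE('a::metric_space)" and m: "\<mu> \<in> P1" and n: "\<nu> \<in> (P1 :: 'a measure set)"
  shows "Icost \<mu> \<nu> < \<infinity>"
proof -
  note pm = P1D[OF m] and pn = P1D[OF n]
  obtain x0 where x0: "(\<integral>\<^sup>+ x. ennreal (dist x x0) \<partial>\<mu>) < \<infinity>" using pm by blast
  obtain x1 where x1: "(\<integral>\<^sup>+ x. ennreal (dist x x1) \<partial>\<nu>) < \<infinity>" using pn by blast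
  interpret M: prob_space \<mu> using pm by blast
  interpret N: prob_space \<nu> using pn by blast
  have same: "distr \<mu> borel (\<lambda>_. x1) = distr \<nu> borel (\<lambda>_. x1)"
  proof (rule measure_eqI)
    fix A assume A: "A \<in> sets (distr \<mu> borel (\<lambda>_. x1))"
    have c1: "(\<lambda>_. x1) \<in> measurable \<mu> borel" "(\<lambda>_. x1) \<in> measurable \<nu> borel" by auto
    show "emeasure (distr \<mu> borel (\<lambda>_. x1)) A = emeasure (distr \<nu> borel (\<lambda>_. x1)) A"
      using A by (simp add: emeasure_distr[OF c1(1)] emeasure_distr[OF c1(2)] M.emeasure_space_1 N.emeasure_space_1)
  qed simp
  have "Icost \<mu> (distr \<mu> borel (\<lambda>_. x1)) \<le> (\<integral>\<^sup>+ x. ennreal (dist x x1) \<partial>\<mu>)"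
    using Icost_le[OF map_coupling(1)[of \<mu> "\<lambda>_. x1"]] map_coupling(2)[of \<mu> "\<lambda>_. x1"] pm
    by (simp add: continuous_on_const)
  also have "\<dots> \<le> (\<integral>\<^sup>+ x. ennreal (dist x x0) + ennreal (dist x0 x1) \<partial>\<mu>)"
    by (intro nn_integral_mono) (simp add: ennreal_plus[symmetric] del: ennreal_plus add: dist_triangle)
  also have "\<dots> = (\<integral>\<^sup>+ x. ennreal (dist x x0) \<partial>\<mu>) + ennreal (dist x0 x1)"
  proof -
    have "(\<lambda>x. ennreal (dist x x0)) \<in> borel_measurable \<mu>"
    proof -
      have "(\<lambda>x. dist x x0) \<in> borel_measurable \<mu>"
        by (rule meas_sets_borel) (use pm in \<open>auto intro!: borel_measurable_continuous_onI continuous_intros\<close>)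
      from measurable_compose[OF this measurable_ennreal] show ?thesis by simp
    qed
    then show ?thesis by (simp add: nn_integral_add M.emeasure_space_1)
  qed
  also have "\<dots> < \<infinity>" using x0 by (simp add: less_top[symmetric])
  finally have a: "Icost \<mu> (distr \<nu> borel (\<lambda>_. x1)) < \<infinity>" using same by simp
  have "Icost \<nu> (distr \<nu> borel (\<lambda>_. x1)) \<le> (\<integral>\<^sup>+ x. ennreal (dist x x1) \<partial>\<nu>)"
    using Icost_le[OF map_coupling(1)[of \<nu> "\<lambda>_. x1"]] map_coupling(2)[of \<nu> "\<lambda>_. x1"] pn
    by (simp add: continuous_on_const)
  also have "\<dots> < \<infinity>" by (rule x1)
  finally have b: "Icost (distr \<nu> borel (\<lambda>_. x1)) \<nu> < \<infinity>" by (simp add: Icost_sym)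
  have "Icost \<mu> \<nu> \<le> Icost \<mu> (distr \<nu> borel (\<lambda>_. x1)) + Icost (distr \<nu> borel (\<lambda>_. x1)) \<nu>"
    by (rule Icost_tri[OF hprop])
  also have "\<dots> < \<infinity>" using a b by (simp add: less_top[symmetric])
  finally show ?thesis .
qed

lemma w1_tri:
  assumes "proper_space TYPE('a::metric_space)" "\<mu> \<in> P1" "\<nu> \<in> P1" "\<rho> \<in> (P1 :: 'a measure set)"
  shows "w1 \<mu> \<rho> \<le> w1 \<mu> \<nu> + w1 \<nu> \<rho>"
proof -
  have f: "Icost \<mu> \<nu> < top" "Icost \<nu> \<rho> < top" using Icost_fin assms by auto
  have "enn2real (Icost \<mu> \<rho>) \<le> enn2real (Icost \<mu> \<nu> + Icost \<nu> \<rho>)"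
    using f by (intro enn2real_mono Icost_tri[OF assms(1)]) (simp add: less_top[symmetric])
  also have "\<dots> = enn2real (Icost \<mu> \<nu>) + enn2real (Icost \<nu> \<rho>)"
    using f by (intro enn2real_plus) (auto simp: less_top[symmetric])
  finally show ?thesis unfolding w1_Icost .
qed

lemma w1_sym: "w1 \<mu> \<nu> = w1 \<nu> \<mu>"
  unfolding w1_Icost using Icost_sym by metis

lemma w1_self: "\<mu> \<in> P1 \<Longrightarrow> w1 \<mu> \<mu> = 0"
  unfolding w1_Icost by (simp add: Icost_self)

lemma w1_nonneg: "w1 \<mu> \<nu> \<ge> 0"
  unfolding w1_Icost by simp

theorem mainTheorem7:
  fixes f :: "'a::metric_space \<Rightarrow> 'a"
    and B :: "'a measure set"
    and \<delta> :: real
    and F :: "nat \<Rightarrow> 'a measure \<Rightarrow> 'a measure"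
  assumes "proper_space TYPE('a)"
    and "continuous_on UNIV f"
    and "w1_continuous (push f)"
    and "w1_closed B" and "w1_bounded B"
    and "\<delta> > 0"
    and "admissible (\<lambda>_. push f) (w1_closure (w1_nbhd B \<delta>))"
    and "\<And>n. w1_continuous (F n)"
    and "(\<lambda>n. SUP \<mu>\<in>w1_nbhd B \<delta>. ennreal (w1 (push f \<mu>) (F n \<mu>))) \<longlonglongrightarrow> 0"
    and "w1_unif_continuous_on (w1_nbhd B \<delta>) (push f)"
  shows "admissible F B"
proof -
  note hp = assms(1)
  define \<Phi> where "\<Phi> = push f"
  define U where "U = w1_nbhd B \<delta>"
  have BP: "B \<subseteq> P1" using assms(4) unfolding w1_closed_def by blast
  have \<Phi>P: "\<Phi> \<mu> \<in> P1" if "\<mu> \<in> P1" for \<mu> using assms(3) that unfolding w1_continuous_def \<Phi>_def by blast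
  have FP: "F n \<mu> \<in> P1" if "\<mu> \<in> P1" for n \<mu> using assms(8)[of n] that unfolding w1_continuous_def by blast
  have orbF: "(F n ^^ j) \<mu> \<in> P1" if "\<mu> \<in> P1" for n j \<mu>
    using that by (induction j) (auto intro: FP)
  have orb\<Phi>: "(\<Phi> ^^ j) \<mu> \<in> P1" if "\<mu> \<in> P1" for j \<mu>
    using that by (induction j) (auto intro: \<Phi>P)
  have BU: "B \<subseteq> U"
  proof
    fix \<mu> assume "\<mu> \<in> B"
    then have "\<mu> \<in> P1" using BP by blast
    moreover have "w1 \<mu> \<mu> < \<delta>" using w1_self[OF \<open>\<mu> \<in> P1\<close>] assms(6) by simp
    ultimately show "\<mu> \<in> U" unfolding U_def w1_nbhd_def using \<open>\<mu> \<in> B\<close> by blast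
  qed
  have UP: "U \<subseteq> P1" unfolding U_def w1_nbhd_def by blast
  have Ucl: "U \<subseteq> w1_closure U"
  proof
    fix \<mu> assume "\<mu> \<in> U"
    then have "\<mu> \<in> P1" using UP by blast
    then show "\<mu> \<in> w1_closure U" unfolding w1_closure_def using \<open>\<mu> \<in> U\<close> w1_self[OF \<open>\<mu> \<in> P1\<close>] by force
  qed
  have E: "\<exists>N. \<forall>n\<ge>N. \<forall>\<mu>\<in>U. w1 (\<Phi> \<mu>) (F n \<mu>) < \<eta>" if "\<eta> > 0" for \<eta>
  proof -
    have "eventually (\<lambda>n. (SUP \<mu>\<in>w1_nbhd B \<delta>. ennreal (w1 (push f \<mu>) (F n \<mu>))) < ennreal \<eta>) sequentially"
      using order_tendstoD(2)[OF assms(9)] that by simp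
    then obtain N where N: "\<And>n. n \<ge> N \<Longrightarrow> (SUP \<mu>\<in>w1_nbhd B \<delta>. ennreal (w1 (push f \<mu>) (F n \<mu>))) < ennreal \<eta>"
      unfolding eventually_sequentially by blast
    show ?thesis
    proof (intro exI allI impI ballI)
      fix n \<mu> assume "n \<ge> N" "\<mu> \<in> U"
      then have "ennreal (w1 (\<Phi> \<mu>) (F n \<mu>)) < ennreal \<eta>"
        using N[of n] unfolding U_def \<Phi>_def by (meson SUP_upper order.strict_trans1)
      then show "w1 (\<Phi> \<mu>) (F n \<mu>) < \<eta>" using ennreal_less_iff[OF w1_nonneg] by blast
    qed
  qed
  have UC: "\<exists>d>0. \<forall>a\<in>U. \<forall>b\<in>U. w1 a b < d \<longrightarrow> w1 (\<Phi> a) (\<Phi> b) < e" if "e > 0" for e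
    using assms(10) that unfolding w1_unif_continuous_on_def U_def \<Phi>_def by blast
  have shadow: "\<forall>\<eta>>0. \<exists>N. \<forall>n\<ge>N. \<forall>\<nu>\<in>P1. (\<forall>j\<le>K. (F n ^^ j) \<nu> \<in> B) \<longrightarrow>
      (\<forall>j\<le>K. w1 ((\<Phi> ^^ j) \<nu>) ((F n ^^ j) \<nu>) < \<eta>)" for K
  proof (induction K)
    case 0
    show ?case
    proof (intro allI impI exI[of _ 0] ballI)
      fix \<eta> :: real and n j and \<nu> :: "'a measure" assume "\<eta> > 0" "\<nu> \<in> P1" "j \<le> (0::nat)"
      then show "w1 ((\<Phi> ^^ j) \<nu>) ((F n ^^ j) \<nu>) < \<eta>" using w1_self[of \<nu>] by simp
    qed
  next
    case (Suc K)
    show ?case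
    proof (intro allI impI)
      fix \<eta> :: real assume "\<eta> > 0"
      define \<eta>' where "\<eta>' = min \<eta> \<delta>"
      have \<eta>': "\<eta>' > 0" "\<eta>' \<le> \<eta>" "\<eta>' \<le> \<delta>" using \<open>\<eta> > 0\<close> assms(6) unfolding \<eta>'_def by auto
      obtain d where d: "d > 0" "\<And>a b. a \<in> U \<Longrightarrow> b \<in> U \<Longrightarrow> w1 a b < d \<Longrightarrow> w1 (\<Phi> a) (\<Phi> b) < \<eta>'/2"
        using UC[of "\<eta>'/2"] \<eta>' by auto
      have "min (min d \<delta>) \<eta>' > 0" using d(1) \<eta>'(1) assms(6) by simp
      from Suc.IH[rule_format, OF this]
      obtain N1 where N1: "\<And>n \<nu>. n \<ge> N1 \<Longrightarrow> \<nu> \<in> P1 \<Longrightarrow> (\<forall>j\<le>K. (F n ^^ j) \<nu> \<in> B) \<Longrightarrow>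
          (\<forall>j\<le>K. w1 ((\<Phi> ^^ j) \<nu>) ((F n ^^ j) \<nu>) < min (min d \<delta>) \<eta>')"
        by blast
      obtain N2 where N2: "\<And>n \<mu>. n \<ge> N2 \<Longrightarrow> \<mu> \<in> U \<Longrightarrow> w1 (\<Phi> \<mu>) (F n \<mu>) < \<eta>'/2"
        using E[of "\<eta>'/2"] \<eta>'(1) by auto
      show "\<exists>N. \<forall>n\<ge>N. \<forall>\<nu>\<in>P1. (\<forall>j\<le>Suc K. (F n ^^ j) \<nu> \<in> B) \<longrightarrow>
          (\<forall>j\<le>Suc K. w1 ((\<Phi> ^^ j) \<nu>) ((F n ^^ j) \<nu>) < \<eta>)"
      proof (intro exI[of _ "max N1 N2"] allI impI ballI)
        fix n \<nu> j assume n: "max N1 N2 \<le> n" and \<nu>: "\<nu> \<in> P1" and ob: "\<forall>j\<le>Suc K. (F n ^^ j) \<nu> \<in> B"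
          and j: "j \<le> Suc K"
        have IH: "\<forall>j\<le>K. w1 ((\<Phi> ^^ j) \<nu>) ((F n ^^ j) \<nu>) < min (min d \<delta>) \<eta>'"
          using N1[of n \<nu>] n \<nu> ob by auto
        show "w1 ((\<Phi> ^^ j) \<nu>) ((F n ^^ j) \<nu>) < \<eta>"
        proof (cases "j \<le> K")
          case True
          then show ?thesis using IH \<eta>' by fastforce
        next
          case False
          then have jK: "j = Suc K" using j by simp
          define a where "a = (\<Phi> ^^ K) \<nu>"
          define b where "b = (F n ^^ K) \<nu>"
          have bB: "b \<in> B" unfolding b_def using ob by simp
          have bP: "b \<in> P1" using bB BP by blast
          have aP: "a \<in> P1" unfolding a_def using orb\<Phi> \<nu> by blast
          have ab: "w1 a b < min (min d \<delta>) \<eta>'" using IH unfolding a_def b_def by simp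
          have aU: "a \<in> U" unfolding U_def w1_nbhd_def using aP bB ab by force
          have bU: "b \<in> U" using bB BU by blast
          have 1: "w1 (\<Phi> a) (\<Phi> b) < \<eta>'/2" using d(2)[OF aU bU] ab by simp
          have 2: "w1 (\<Phi> b) (F n b) < \<eta>'/2" using N2[OF _ bU] n by simp
          have "w1 (\<Phi> a) (F n b) \<le> w1 (\<Phi> a) (\<Phi> b) + w1 (\<Phi> b) (F n b)"
            by (rule w1_tri[OF hp \<Phi>P[OF aP] \<Phi>P[OF bP] FP[OF bP]])
          also have "\<dots> < \<eta>'" using 1 2 by simp
          finally show ?thesis using \<eta>' jK unfolding a_def b_def by simp
        qed
      qed
    qed
  qed
  have "\<forall>K. \<exists>N. \<forall>n\<ge>N. \<forall>\<nu>\<in>P1. (\<forall>j\<le>K. (F n ^^ j) \<nu> \<in> B) \<longrightarrow>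
      (\<forall>j\<le>K. w1 ((\<Phi> ^^ j) \<nu>) ((F n ^^ j) \<nu>) < min (1 / real (Suc K)) \<delta>)"
  proof
    fix K :: nat
    have "min (1 / real (Suc K)) \<delta> > 0" using assms(6) by simp
    from shadow[of K, rule_format, OF this]
    show "\<exists>N. \<forall>n\<ge>N. \<forall>\<nu>\<in>P1. (\<forall>j\<le>K. (F n ^^ j) \<nu> \<in> B) \<longrightarrow>
      (\<forall>j\<le>K. w1 ((\<Phi> ^^ j) \<nu>) ((F n ^^ j) \<nu>) < min (1 / real (Suc K)) \<delta>)" .
  qed
  then obtain NN where NN: "\<And>K n \<nu> j. n \<ge> NN K \<Longrightarrow> \<nu> \<in> P1 \<Longrightarrow> (\<forall>j\<le>K. (F n ^^ j) \<nu> \<in> B) \<Longrightarrow> j \<le> K \<Longrightarrow>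
      w1 ((\<Phi> ^^ j) \<nu>) ((F n ^^ j) \<nu>) < min (1 / real (Suc K)) \<delta>"
    by (simp only: choice_iff) blast
  show ?thesis unfolding admissible_def
  proof (intro allI impI)
    fix \<mu>s :: "nat \<Rightarrow> 'a measure" and m :: "nat \<Rightarrow> nat"
    assume H: "filterlim m at_top sequentially \<and> (\<forall>n k. k \<le> m n \<longrightarrow> (F n ^^ k) (\<mu>s n) \<in> B)"
    then have hm: "filterlim m at_top sequentially" and orb: "\<And>n k. k \<le> m n \<Longrightarrow> (F n ^^ k) (\<mu>s n) \<in> B"
      by auto
    show "\<exists>r \<nu>. strict_mono r \<and> \<nu> \<in> P1 \<and> (\<lambda>j. w1 ((F (r j) ^^ m (r j)) (\<mu>s (r j))) \<nu>) \<longlonglongrightarrow> 0"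
    proof -
      define T where "T n = {K. K \<le> m n \<and> NN K \<le> n}" for n
      define Kn where "Kn n = Max (insert 0 (T n))" for n
      have finT: "finite (insert 0 (T n))" for n
        unfolding T_def by (rule finite_insert[THEN iffD2], rule finite_subset[of _ "{..m n}"]) auto
      have Kn_in: "Kn n \<in> insert 0 (T n)" for n unfolding Kn_def by (rule Max_in[OF finT]) simp
      have Kn_le: "Kn n \<le> m n" for n using Kn_in[of n] unfolding T_def by auto
      have Kn_ge: "K \<in> T n \<Longrightarrow> K \<le> Kn n" for K n unfolding Kn_def using finT[of n] by (intro Max_ge) auto
      have Kn_lim: "filterlim Kn at_top sequentially"
        unfolding filterlim_at_top
      proof
        fix L :: nat
        have "eventually (\<lambda>n. L \<le> m n) sequentially" using hm unfolding filterlim_at_top by blast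
        moreover have "eventually (\<lambda>n. NN L \<le> n) sequentially" by (rule eventually_ge_at_top)
        ultimately show "eventually (\<lambda>n. L \<le> Kn n) sequentially"
          by eventually_elim (auto intro!: Kn_ge simp: T_def)
      qed
      define \<nu> where "\<nu> n = (F n ^^ (m n - Kn n)) (\<mu>s n)" for n
      have orb\<nu>: "(F n ^^ j) (\<nu> n) \<in> B" if "j \<le> Kn n" for n j
      proof -
        have "(F n ^^ j) (\<nu> n) = (F n ^^ (j + (m n - Kn n))) (\<mu>s n)"
          unfolding \<nu>_def by (simp add: funpow_add)
        moreover have "j + (m n - Kn n) \<le> m n" using that Kn_le[of n] by simp
        ultimately show ?thesis using orb by simp
      qed
      have \<nu>P: "\<nu> n \<in> P1" for n using orb\<nu>[of 0 n] BP by auto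
      have endpt: "(F n ^^ Kn n) (\<nu> n) = (F n ^^ m n) (\<mu>s n)" for n
      proof -
        have "(F n ^^ Kn n) (\<nu> n) = (F n ^^ (Kn n + (m n - Kn n))) (\<mu>s n)"
          unfolding \<nu>_def by (simp add: funpow_add)
        then show ?thesis using Kn_le[of n] by simp
      qed
      have close: "w1 ((\<Phi> ^^ j) (\<nu> n)) ((F n ^^ j) (\<nu> n)) < min (1 / real (Suc (Kn n))) \<delta>"
        if "j \<le> Kn n" for n j
      proof (cases "Kn n = 0")
        case True
        then have "j = 0" using that by simp
        then show ?thesis using True w1_self[OF \<nu>P[of n]] assms(6) by simp
      next
        case False
        then have "NN (Kn n) \<le> n" using Kn_in[of n] unfolding T_def by auto
        then show ?thesis using NN[OF _ \<nu>P[of n] _ that] orb\<nu> by blast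
      qed
      have inU: "(\<Phi> ^^ j) (\<nu> n) \<in> w1_closure (w1_nbhd B \<delta>)" if "j \<le> Kn n" for n j
      proof -
        have "(\<Phi> ^^ j) (\<nu> n) \<in> U"
          unfolding U_def w1_nbhd_def using orb\<Phi>[OF \<nu>P[of n]] orb\<nu>[OF that] close[OF that] by force
        then show ?thesis using Ucl unfolding U_def by blast
      qed
      have adm: "filterlim Kn at_top sequentially \<and> (\<forall>n k. k \<le> Kn n \<longrightarrow> ((\<lambda>_. push f) n ^^ k) (\<nu> n) \<in> w1_closure (w1_nbhd B \<delta>))"
        using Kn_lim inU unfolding \<Phi>_def by auto
      from assms(7)[unfolded admissible_def, rule_format, OF adm]
      obtain r lam where r: "strict_mono r" and lam: "lam \<in> P1"
        and lim: "(\<lambda>j. w1 ((\<Phi> ^^ Kn (r j)) (\<nu> (r j))) lam) \<longlonglongrightarrow> 0"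
        unfolding \<Phi>_def by blast
      have Kr: "filterlim (\<lambda>j. Kn (r j)) at_top sequentially"
        using filterlim_compose[OF Kn_lim filterlim_subseq[OF r]] by (simp add: comp_def)
      have inv0: "(\<lambda>j. 1 / real (Suc (Kn (r j)))) \<longlonglongrightarrow> 0"
        using filterlim_compose[OF LIMSEQ_inverse_real_of_nat Kr] by (simp add: comp_def divide_inverse)
      have bound: "w1 ((F (r j) ^^ m (r j)) (\<mu>s (r j))) lam \<le> 1 / real (Suc (Kn (r j))) + w1 ((\<Phi> ^^ Kn (r j)) (\<nu> (r j))) lam" for j
      proof -
        let ?n = "r j"
        have "w1 ((F ?n ^^ m ?n) (\<mu>s ?n)) lam = w1 ((F ?n ^^ Kn ?n) (\<nu> ?n)) lam" by (simp add: endpt)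
        also have "\<dots> \<le> w1 ((F ?n ^^ Kn ?n) (\<nu> ?n)) ((\<Phi> ^^ Kn ?n) (\<nu> ?n)) + w1 ((\<Phi> ^^ Kn ?n) (\<nu> ?n)) lam"
          by (rule w1_tri[OF hp orbF[OF \<nu>P] orb\<Phi>[OF \<nu>P] lam])
        also have "w1 ((F ?n ^^ Kn ?n) (\<nu> ?n)) ((\<Phi> ^^ Kn ?n) (\<nu> ?n)) \<le> 1 / real (Suc (Kn ?n))"
          using close[of "Kn ?n" ?n] by (simp add: w1_sym)
        finally show ?thesis by simp
      qed
      have "(\<lambda>j. w1 ((F (r j) ^^ m (r j)) (\<mu>s (r j))) lam) \<longlonglongrightarrow> 0"
      proof (rule tendsto_sandwich[of "\<lambda>_. 0" _ _ "\<lambda>j. 1 / real (Suc (Kn (r j))) + w1 ((\<Phi> ^^ Kn (r j)) (\<nu> (r j))) lam"])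
        show "\<forall>\<^sub>F j in sequentially. 0 \<le> w1 ((F (r j) ^^ m (r j)) (\<mu>s (r j))) lam" by (simp add: w1_nonneg)
        show "\<forall>\<^sub>F j in sequentially. w1 ((F (r j) ^^ m (r j)) (\<mu>s (r j))) lam \<le> 1 / real (Suc (Kn (r j))) + w1 ((\<Phi> ^^ Kn (r j)) (\<nu> (r j))) lam"
          using bound by simp
        show "(\<lambda>_. 0) \<longlonglongrightarrow> (0::real)" by simp
        show "(\<lambda>j. 1 / real (Suc (Kn (r j))) + w1 ((\<Phi> ^^ Kn (r j)) (\<nu> (r j))) lam) \<longlonglongrightarrow> 0"
          using tendsto_add[OF inv0 lim] by simp
      qed
      then show ?thesis using r lam by blast
    qed
  qed
qed

end
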